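(* The equation $x+y=z$ with $x,y,z\in\mathcal{B}_2$ has exactly one solution, namely $$x=y=\frac{\sqrt3-1}{2}=[\overline{2,1}],\qquad z=\sqrt3-1=[\overline{1,2}].$$
   Context: For irrational $x\in(0,1)$, $x=[a_1(x),a_2(x),\dots]$ denotes its simple continued fraction expansion; an overline denotes a periodically repeated block. $\mathcal{B}_2$ is the set of irrational $x\in(0,1)$ with $a_k(x)\le 2$ for all $k\ge1$. *)

theory Defs
  imports "HOL-Analysis.Analysis"
begin

text \<open>Gauss map and continued fraction digits of x in (0,1):
  x = [a_1(x), a_2(x), ...] with a_k(x) = floor (1 / T^(k-1) x),
  where T x = 1/x - floor (1/x).\<close>

definition gauss_map :: "real \<Rightarrow> real" where
  "gauss_map x = 1 / x - of_int \<lfloor>1 / x\<rfloor>"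

definition cf_digit :: "real \<Rightarrow> nat \<Rightarrow> int" where
  "cf_digit x k = \<lfloor>1 / (gauss_map ^^ (k - 1)) x\<rfloor>"

definition B2 :: "real set" where
  "B2 = {x. x \<notin> \<rat> \<and> 0 < x \<and> x < 1 \<and> (\<forall>k\<ge>1. cf_digit x k \<le> 2)}"

end

theory Submission
  imports Defs "HOL-Computational_Algebra.Primes"
begin

lemma sqrt3_irrat: "sqrt 3 \<notin> \<rat>"
proof
  have pr: "prime (3::nat)" by simp
  have p: "(3::nat) > 1" by simp
  assume "sqrt 3 \<in> \<rat>"
  then have "sqrt (real (3::nat)) \<in> \<rat>" by simp
  then obtain m n :: nat
    where n: "n \<noteq> 0"
      and sqrt_rat: "\<bar>sqrt (real (3::nat))\<bar> = m / n"
      and "coprime m n" by (rule Rats_abs_nat_div_natE)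
  have eq: "m\<^sup>2 = 3 * n\<^sup>2"
  proof -
    from n and sqrt_rat have "m = \<bar>sqrt 3\<bar> * n" by simp
    then have "real (m\<^sup>2) = (sqrt 3)\<^sup>2 * n\<^sup>2" by (simp add: power_mult_distrib)
    also have "(sqrt 3)\<^sup>2 = 3" by simp
    finally have "real (m\<^sup>2) = real (3 * n\<^sup>2)" by simp
    thus ?thesis by (simp only: of_nat_eq_iff)
  qed
  have "3 dvd m \<and> 3 dvd n"
  proof
    from eq have "3 dvd m\<^sup>2" by simp
    with pr show "3 dvd m" by (rule prime_dvd_power)
    then obtain k where "m = 3 * k" ..
    with eq have "3 * n\<^sup>2 = 3\<^sup>2 * k\<^sup>2" by algebra
    then have "n\<^sup>2 = 3 * k\<^sup>2" by (simp add: power2_eq_square)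
    then have "3 dvd n\<^sup>2" by simp
    with pr show "3 dvd n" by (rule prime_dvd_power)
  qed
  then have "3 dvd gcd m n" by simp
  with \<open>coprime m n\<close> show False by simp
qed

definition S where "S = {x::real. x \<notin> \<rat> \<and> 0 < x \<and> x < 1 \<and> (\<forall>k\<ge>1. cf_digit x k \<le> 2)}"

lemma B2_S: "B2 = S" unfolding B2_def S_def by simp

lemma digit_shift:
  assumes "k \<ge> 1" shows "cf_digit (gauss_map x) k = cf_digit x (k+1)"
proof -
  have "(gauss_map ^^ (k - 1)) (gauss_map x) = (gauss_map ^^ k) x"
    using assms by (metis Suc_diff_1 comp_apply funpow_Suc_right less_eq_Suc_le One_nat_def)
  thus ?thesis unfolding cf_digit_def by simp
qed

lemma S_step:
  assumes "x \<in> S"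
  shows "gauss_map x \<in> S" and "x = 1 / (of_int \<lfloor>1/x\<rfloor> + gauss_map x)"
    and "1 \<le> \<lfloor>1/x\<rfloor>" and "\<lfloor>1/x\<rfloor> \<le> 2"
proof -
  have x: "x \<notin> \<rat>" "0 < x" "x < 1" "\<forall>k\<ge>1. cf_digit x k \<le> 2" using assms unfolding S_def by auto
  have ir: "gauss_map x \<notin> \<rat>"
  proof
    assume "gauss_map x \<in> \<rat>"
    then have "gauss_map x + of_int \<lfloor>1/x\<rfloor> \<in> \<rat>" by simp
    then have "1/x \<in> \<rat>" unfolding gauss_map_def by simp
    then have "1/(1/x) \<in> \<rat>" by (rule Rats_divide[OF Rats_1])
    thus False using x by simp
  qed
  have g0: "0 \<le> gauss_map x" "gauss_map x < 1" unfolding gauss_map_def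
    by (auto simp: of_int_floor_le) (linarith)
  have "gauss_map x \<noteq> 0" using ir by auto
  with g0 have gp: "0 < gauss_map x" by simp
  show "gauss_map x \<in> S" unfolding S_def using ir gp g0 x(4) digit_shift by auto
  show "x = 1 / (of_int \<lfloor>1/x\<rfloor> + gauss_map x)" unfolding gauss_map_def using x by simp
  have "1 < 1/x" using x by simp
  then show "1 \<le> \<lfloor>1/x\<rfloor>" by linarith
  show "\<lfloor>1/x\<rfloor> \<le> 2" using x(4)[rule_format, of 1] unfolding cf_digit_def by simp
qed

lemma alg: fixes w :: real assumes "w*w = 3" "1 < w"
  shows "1/(w-1) = 1 + (w-1)/2" "1/((w-1)/2) = 2 + (w-1)" "(w-1)/2 = 1/(1+w)"
proof -
  have ne: "w - 1 \<noteq> 0" "1 + w \<noteq> 0" using assms by auto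
  show "1/(w-1) = 1 + (w-1)/2" using ne assms(1) by (simp add: divide_eq_eq field_simps)
  show "1/((w-1)/2) = 2 + (w-1)" using ne assms(1) by (simp add: divide_eq_eq field_simps)
  show "(w-1)/2 = 1/(1+w)" using ne assms(1) by (simp add: eq_divide_eq algebra_simps)
qed

lemma S_bounds:
  assumes "x \<in> S"
  shows "(sqrt 3 - 1) / 2 \<le> x \<and> x \<le> sqrt 3 - 1"
proof -
  have ne: "S \<noteq> {}" using assms by auto
  have bd: "\<And>y. y \<in> S \<Longrightarrow> 0 < y \<and> y < 1" unfolding S_def by auto
  have ba: "bdd_above S" using bd by (meson bdd_aboveI less_imp_le)
  have bb: "bdd_below S" using bd by (meson bdd_belowI less_imp_le)
  define M where "M = Sup S"
  define m where "m = Inf S"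
  have mx: "m \<le> x" "x \<le> M" unfolding m_def M_def using assms cInf_lower cSup_upper ba bb by auto
  have m0: "0 \<le> m" unfolding m_def using ne bd by (meson cInf_greatest less_imp_le)
  have mM: "m \<le> M" using mx by simp
  have up: "y \<le> 1/(1+m)" if "y \<in> S" for y
  proof -
    have t: "gauss_map y \<in> S" "y = 1 / (of_int \<lfloor>1/y\<rfloor> + gauss_map y)" "1 \<le> \<lfloor>1/y\<rfloor>"
      using S_step[OF that] by auto
    have "m \<le> gauss_map y" unfolding m_def using t(1) bb cInf_lower by auto
    moreover have "(1::real) \<le> of_int \<lfloor>1/y\<rfloor>" using t(3) by (simp only: of_int_le_iff[symmetric, of 1] of_int_1)
    ultimately have "1 + m \<le> of_int \<lfloor>1/y\<rfloor> + gauss_map y" by linarith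
    then show ?thesis using t(2) m0 by (metis frac_le less_eq_real_def zero_less_one add_pos_nonneg)
  qed
  have lo: "1/(2+M) \<le> y" if "y \<in> S" for y
  proof -
    have t: "gauss_map y \<in> S" "y = 1 / (of_int \<lfloor>1/y\<rfloor> + gauss_map y)" "\<lfloor>1/y\<rfloor> \<le> 2"
      using S_step[OF that] by auto
    have "gauss_map y \<le> M" unfolding M_def using t(1) ba cSup_upper by auto
    moreover have "of_int \<lfloor>1/y\<rfloor> \<le> (2::real)" using t(3) by (simp only: of_int_le_iff[symmetric, of _ 2] of_int_numeral)
    moreover have "0 < gauss_map y" using t(1) bd by auto
    moreover have "(1::real) \<le> of_int \<lfloor>1/y\<rfloor>" using S_step(3)[OF that] by (simp only: of_int_le_iff[symmetric, of 1] of_int_1)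
    ultimately have "of_int \<lfloor>1/y\<rfloor> + gauss_map y \<le> 2 + M" "0 < of_int \<lfloor>1/y\<rfloor> + gauss_map y" by linarith+
    then show ?thesis using t(2) by (metis frac_le zero_less_one less_eq_real_def)
  qed
  have M1: "M \<le> 1/(1+m)" unfolding M_def using ne up by (meson cSup_least)
  have m1: "1/(2+M) \<le> m" unfolding m_def using ne lo by (meson cInf_greatest)
  have M0: "0 \<le> M" using m0 mM by simp
  have A: "M * (1+m) \<le> 1" using M1 m0 by (simp add: field_simps)
  have B: "1 \<le> m * (2+M)" using m1 M0 by (simp add: field_simps)
  have "M * (3 + M) \<le> 2 + M"
  proof -
    have "0 \<le> 2 + M" using M0 by linarith
    from mult_right_mono[OF A this] have c1: "M * (1 + m) * (2 + M) \<le> 2 + M" by (simp only: mult_1_left)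
    have c2: "M * 1 \<le> M * (m * (2+M))" using mult_left_mono[OF B M0] .
    have "M * (3 + M) = M * (2 + M) + M * 1" by (simp only: ring_distribs)
    also have "\<dots> \<le> M * (2 + M) + M * (m * (2+M))" using c2 by (rule add_left_mono)
    also have "\<dots> = M * (1 + m) * (2 + M)" by (simp only: ring_distribs mult.assoc)
    also have "\<dots> \<le> 2 + M" by (rule c1)
    finally show ?thesis .
  qed
  then have "(M+1)^2 \<le> 3" by (simp add: power2_eq_square algebra_simps)
  then have Mb: "M + 1 \<le> sqrt 3" by (rule real_le_rsqrt)
  have s3: "sqrt 3 * sqrt 3 = (3::real)" by simp
  have s1: "1 < sqrt (3::real)" using real_sqrt_less_iff[of 1 3] by simp
  have "(sqrt 3 - 1) / 2 = 1 / (1 + sqrt 3)" using alg(3)[OF s3 s1] .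
  also have "\<dots> \<le> 1/(2+M)" using Mb M0 by (simp add: frac_le)
  also have "\<dots> \<le> m" by (rule m1)
  finally show ?thesis using mx Mb by simp
qed


lemma s3_facts: "1 < sqrt (3::real)" "sqrt 3 < 2" "sqrt 3 * sqrt (3::real) = 3"
proof -
  show "1 < sqrt (3::real)" using real_sqrt_less_iff[of 1 3] by simp
  have "sqrt (3::real) < sqrt 4" by (simp only: real_sqrt_less_iff)
  also have "sqrt (4::real) = 2" by (rule real_sqrt_unique) simp_all
  finally show "sqrt 3 < (2::real)" .
  show "sqrt 3 * sqrt (3::real) = 3" by simp
qed

lemma inv_b: "1 / (sqrt 3 - 1) = 1 + (sqrt 3 - 1) / (2::real)"
  using alg(1)[OF s3_facts(3) s3_facts(1)] .

lemma inv_a: "1 / ((sqrt 3 - 1) / 2) = 2 + (sqrt 3 - (1::real))"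
  using alg(2)[OF s3_facts(3) s3_facts(1)] .

lemma fl_b: "\<lfloor>1 / (sqrt 3 - 1::real)\<rfloor> = 1"
proof -
  have "1 \<le> 1 / (sqrt 3 - 1::real)" "1 / (sqrt 3 - 1::real) < 1 + 1"
    unfolding inv_b using s3_facts by auto
  then show ?thesis by (simp only: floor_eq_iff of_int_1)
qed

lemma fl_a: "\<lfloor>1 / ((sqrt 3 - 1) / 2::real)\<rfloor> = 2"
proof -
  have "2 \<le> 1 / ((sqrt 3 - 1) / 2::real)" "1 / ((sqrt 3 - 1) / 2::real) < 2 + 1"
    unfolding inv_a using s3_facts by auto
  then show ?thesis by (simp only: floor_eq_iff of_int_numeral)
qed

lemma g_b: "gauss_map (sqrt 3 - 1) = (sqrt 3 - 1) / 2"
proof -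
  have "gauss_map (sqrt 3 - 1) = 1 / (sqrt 3 - 1) - of_int \<lfloor>1 / (sqrt 3 - 1::real)\<rfloor>"
    by (simp only: gauss_map_def)
  also have "\<dots> = 1 + (sqrt 3 - 1) / 2 - 1" by (subst fl_b, subst inv_b, simp only: of_int_1)
  finally show ?thesis by linarith
qed

lemma g_a: "gauss_map ((sqrt 3 - 1) / 2) = sqrt 3 - 1"
proof -
  have "gauss_map ((sqrt 3 - 1) / 2) = 1 / ((sqrt 3 - 1) / 2) - of_int \<lfloor>1 / ((sqrt 3 - 1) / 2::real)\<rfloor>"
    by (simp only: gauss_map_def)
  also have "\<dots> = 2 + (sqrt 3 - 1) - 2" by (subst fl_a, subst inv_a, simp only: of_int_numeral)
  finally show ?thesis by linarith
qed

lemma step_ab: "y = sqrt 3 - 1 \<or> y = (sqrt 3 - 1) / 2 \<Longrightarrow>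
   gauss_map y = sqrt 3 - 1 \<or> gauss_map y = (sqrt 3 - 1) / 2"
  using g_a g_b by metis

lemma orbit: "x = sqrt 3 - 1 \<or> x = (sqrt 3 - 1) / 2 \<Longrightarrow>
   (gauss_map ^^ n) x = sqrt 3 - 1 \<or> (gauss_map ^^ n) x = (sqrt 3 - 1) / 2"
proof (induction n)
  case 0 then show ?case by (simp only: funpow_0)
next
  case (Suc n)
  then show ?case using step_ab by (simp only: funpow.simps(2) comp_apply)
qed

lemma digits_ok: "x = sqrt 3 - 1 \<or> x = (sqrt 3 - 1) / 2 \<Longrightarrow> \<forall>k\<ge>1. cf_digit x k \<le> 2"
proof (intro allI impI)
  fix k :: nat
  assume x: "x = sqrt 3 - 1 \<or> x = (sqrt 3 - 1) / 2"
  have "(gauss_map ^^ (k-1)) x = sqrt 3 - 1 \<or> (gauss_map ^^ (k-1)) x = (sqrt 3 - 1) / 2"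
    using orbit x by blast
  then obtain y where y: "(gauss_map ^^ (k-1)) x = y" "y = sqrt 3 - 1 \<or> y = (sqrt 3 - 1) / 2"
    by blast
  have "cf_digit x k = \<lfloor>1 / y\<rfloor>" unfolding cf_digit_def y(1) ..
  moreover have "\<lfloor>1 / y\<rfloor> \<le> 2" using y(2) fl_a fl_b
    by (metis one_le_numeral order_refl)
  ultimately show "cf_digit x k \<le> 2" by simp
qed

lemma b_in: "sqrt 3 - 1 \<in> B2"
proof -
  have "sqrt 3 - 1 \<notin> \<rat>"
  proof
    assume "sqrt 3 - 1 \<in> \<rat>"
    then have "sqrt 3 - 1 + 1 \<in> \<rat>" by (rule Rats_add[OF _ Rats_1])
    thus False using sqrt3_irrat by simp
  qed
  then show ?thesis unfolding B2_def using s3_facts digits_ok[of "sqrt 3 - 1"] by auto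
qed

lemma a_in: "(sqrt 3 - 1) / 2 \<in> B2"
proof -
  have "(sqrt 3 - 1) / 2 \<notin> \<rat>"
  proof
    assume "(sqrt 3 - 1) / 2 \<in> \<rat>"
    then have "(sqrt 3 - 1) / 2 * 2 + 1 \<in> \<rat>" by (intro Rats_add Rats_mult) auto
    moreover have "\<And>v::real. (v - 1) / 2 * 2 + 1 = v" by (simp add: field_simps)
    then have "(sqrt 3 - 1) / 2 * 2 + 1 = sqrt (3::real)" by blast
    ultimately show False using sqrt3_irrat by simp
  qed
  then show ?thesis unfolding B2_def using s3_facts digits_ok[of "(sqrt 3 - 1) / 2"] by auto
qed

theorem mainTheorem4:
  shows "{(x, y, z). x \<in> B2 \<and> y \<in> B2 \<and> z \<in> B2 \<and> x + y = z}
         = {((sqrt 3 - 1) / 2, (sqrt 3 - 1) / 2, sqrt 3 - 1)}"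
proof (rule set_eqI)
  fix p :: "real \<times> real \<times> real"
  obtain x y z where p: "p = (x, y, z)" by (cases p) auto
  have e0: "\<And>v::real. v = 2 * (v / 2)" by simp
  have e: "sqrt 3 - 1 = 2 * ((sqrt 3 - 1) / (2::real))" by (rule e0)
  have fwd: "x = (sqrt 3 - 1) / 2 \<and> y = (sqrt 3 - 1) / 2 \<and> z = sqrt 3 - 1"
    if h: "x \<in> B2" "y \<in> B2" "z \<in> B2" "x + y = z"
  proof -
    have bx: "(sqrt 3 - 1) / 2 \<le> x" "(sqrt 3 - 1) / 2 \<le> y" "z \<le> sqrt 3 - 1"
      using S_bounds h B2_S by auto
    then show ?thesis using h(4) e by linarith
  qed
  have bwd: "(sqrt 3 - 1) / 2 + (sqrt 3 - 1) / 2 = sqrt 3 - (1::real)" by simp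
  show "p \<in> {(x, y, z). x \<in> B2 \<and> y \<in> B2 \<and> z \<in> B2 \<and> x + y = z} \<longleftrightarrow>
        p \<in> {((sqrt 3 - 1) / 2, (sqrt 3 - 1) / 2, sqrt 3 - 1)}"
  proof
    assume "p \<in> {(x, y, z). x \<in> B2 \<and> y \<in> B2 \<and> z \<in> B2 \<and> x + y = z}"
    then have "x \<in> B2 \<and> y \<in> B2 \<and> z \<in> B2 \<and> x + y = z" unfolding p by simp
    then show "p \<in> {((sqrt 3 - 1) / 2, (sqrt 3 - 1) / 2, sqrt 3 - 1)}" unfolding p using fwd by simp
  next
    assume "p \<in> {((sqrt 3 - 1) / 2, (sqrt 3 - 1) / 2, sqrt 3 - 1)}"
    then have pp: "p = ((sqrt 3 - 1) / 2, (sqrt 3 - 1) / 2, sqrt 3 - 1)" by (simp only: singleton_iff)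
    show "p \<in> {(x, y, z). x \<in> B2 \<and> y \<in> B2 \<and> z \<in> B2 \<and> x + y = z}"
      unfolding pp mem_Collect_eq prod.case using a_in b_in bwd by blast
  qed
qed

end
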